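(* Let $X$ be a topological space and let $D\subseteq X$ be such that the subspace $D$ is discrete. Then $D$ admits a Noetherian outer base in $X$.
   Context: A family $\mathcal G$ of open sets is Noetherian if $\langle\mathcal G,\subseteq\rangle$ contains no infinite strictly increasing sequence. For $Y\subseteq X$, a family $\mathcal B$ of open subsets of $X$ is an outer base of $Y$ in $X$ if for every $p\in Y$ the family $\{G\in\mathcal B: p\in G\}$ is a neighbourhood base of $p$ in $X$. *)

theory Defs
  imports "HOL-Analysis.Analysis"
begin

definition noetherian_family :: "'a set set \<Rightarrow> bool" where
  "noetherian_family \<G> \<longleftrightarrow> \<not> (\<exists>f :: nat \<Rightarrow> 'a set. (\<forall>n. f n \<in> \<G>) \<and> (\<forall>n. f n \<subset> f (Suc n)))"

definition nhood_base_at :: "'a topology \<Rightarrow> 'a set set \<Rightarrow> 'a \<Rightarrow> bool" where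
  "nhood_base_at X \<B> p \<longleftrightarrow>
     (\<forall>G\<in>\<B>. openin X G \<and> p \<in> G) \<and>
     (\<forall>U. openin X U \<and> p \<in> U \<longrightarrow> (\<exists>G\<in>\<B>. G \<subseteq> U))"

definition outer_base :: "'a topology \<Rightarrow> 'a set \<Rightarrow> 'a set set \<Rightarrow> bool" where
  "outer_base X Y \<B> \<longleftrightarrow>
     (\<forall>G\<in>\<B>. openin X G) \<and> (\<forall>p\<in>Y. nhood_base_at X {G\<in>\<B>. p \<in> G} p)"

end

theory Submission
  imports Defs
begin

theorem corollary1:
  fixes X :: "'a topology" and D :: "'a set"
  assumes "D \<subseteq> topspace X"
    and "subtopology X D = discrete_topology D"
  shows "\<exists>\<B>. outer_base X D \<B> \<and> noetherian_family \<B>"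
proof -
  obtain r :: "'a set rel" where r: "Well_order r" "Field r = UNIV"
    using well_ordering[where 'a="'a set"] by blast
  have wf: "wf (r - Id)"
    using r(1) unfolding well_order_on_def by (rule conjunct2)
  have "linear_order_on (Field r) r"
    using r(1) unfolding well_order_on_def by (rule conjunct1)
  then have tot: "total_on UNIV r"
    unfolding linear_order_on_def r(2) by (rule conjunct2)
  define N where "N = {V. openin X V \<and> (\<exists>d. V \<inter> D = {d})}"
  define B where "B = {V \<in> N. \<forall>W\<in>N. (W, V) \<in> r - Id \<longrightarrow> \<not> W \<subseteq> V}"
  have loc: "\<exists>U. openin X U \<and> U \<inter> D = {p}" if "p \<in> D" for p
  proof -
    have "openin (subtopology X D) {p}" using assms(2) that by simp
    then obtain U where "openin X U" "{p} = D \<inter> U" by (auto simp: openin_subtopology)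
    then show ?thesis by blast
  qed
  have ob: "outer_base X D B"
    unfolding outer_base_def nhood_base_at_def
  proof (intro conjI ballI allI impI)
    fix G assume "G \<in> B" then show "openin X G" by (auto simp: B_def N_def)
  next
    fix p G assume "p \<in> D" "G \<in> {G \<in> B. p \<in> G}"
    then show "openin X G" by (auto simp: B_def N_def)
  next
    fix p G assume "p \<in> D" "G \<in> {G \<in> B. p \<in> G}"
    then show "p \<in> G" by auto
  next
    fix p U assume p: "p \<in> D" and U: "openin X U \<and> p \<in> U"
    obtain V where V: "openin X V" "V \<inter> D = {p}" using loc[OF p] by blast
    define S where "S = {W \<in> N. W \<subseteq> U \<inter> V \<and> p \<in> W}"
    have "U \<inter> V \<in> S" using U V by (auto simp: S_def N_def)
    then obtain W where W: "W \<in> S" and mn: "\<And>Y. (Y, W) \<in> r - Id \<Longrightarrow> Y \<notin> S"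
      by (rule wfE_min[OF wf]) blast+
    have "W \<in> B"
      unfolding B_def
    proof (intro CollectI conjI ballI impI)
      show "W \<in> N" using W by (auto simp: S_def)
    next
      fix Y assume Y1: "Y \<in> N" and Y2: "(Y, W) \<in> r - Id"
      show "\<not> Y \<subseteq> W"
      proof
        assume Y4: "Y \<subseteq> W"
        obtain d where d: "Y \<inter> D = {d}" using Y1 by (auto simp: N_def)
        have "W \<inter> D \<subseteq> V \<inter> D" using W by (auto simp: S_def)
        then have "d = p" using d Y4 V(2) by blast
        then have "Y \<in> S" using Y1 Y4 W d by (auto simp: S_def)
        then show False using mn Y2 by blast
      qed
    qed
    then show "\<exists>G\<in>{G \<in> B. p \<in> G}. G \<subseteq> U" using W by (auto simp: S_def)
  qed
  have "noetherian_family B"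
    unfolding noetherian_family_def
  proof
    assume "\<exists>f. (\<forall>n. f n \<in> B) \<and> (\<forall>n. f n \<subset> f (Suc n))"
    then obtain f where f: "\<And>n. f n \<in> B" "\<And>n. f n \<subset> f (Suc n)" by blast
    have "(f (Suc n), f n) \<in> r - Id" for n
    proof -
      have ne: "f n \<noteq> f (Suc n)" using f(2)[of n] by blast
      have "(f n, f (Suc n)) \<notin> r - Id"
      proof
        assume a: "(f n, f (Suc n)) \<in> r - Id"
        have "f (Suc n) \<in> B" by (rule f(1))
        then have "\<forall>W\<in>N. (W, f (Suc n)) \<in> r - Id \<longrightarrow> \<not> W \<subseteq> f (Suc n)"
          unfolding B_def by simp
        moreover have "f n \<in> N" using f(1)[of n] unfolding B_def by simp
        ultimately show False using a f(2)[of n] by auto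
      qed
      then show ?thesis using tot ne unfolding total_on_def by blast
    qed
    then show False using wf unfolding wf_iff_no_infinite_down_chain by blast
  qed
  then show ?thesis using ob by blast
qed

end
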